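(* Let $S_1,\ldots,S_k$ be measurable subsets of $[0,\infty)$ with positive Lebesgue measure, ordered in the sense that for any $x\in S_i$ and $y\in S_j$ with $i<j$, $x<y$ holds almost surely. Let $w$ be a measurable function that does not change its sign inside each $S_j$, and assume $\int_{S_j}w(x)\,dx\ne0$ for each $j$ (all integrals below being finite). Then the $k\times k$ matrix $\mathrm M$ with entries $\mathrm M_{ij}=\int_{S_j}w(x)x^{2(i-1)}\,dx$, $i,j=1,\ldots,k$, is non-singular. *)

theory Defs
  imports "HOL-Analysis.Analysis" "Jordan_Normal_Form.Determinant"
begin

end

theory Submission
  imports Defs
begin
lemma finite_null_lebesgue: "finite (A::real set) \<Longrightarrow> A \<in> null_sets lebesgue"
  by (induction A rule: finite_induct) auto

lemma L1:
  fixes h w :: "real \<Rightarrow> real" and c :: real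
  assumes A: "A \<in> sets M" and wm: "w \<in> borel_measurable M"
    and hi: "set_integrable M A h" and h0: "(LINT x:A|M. h x) = 0"
    and w0: "(LINT x:A|M. w x) \<noteq> 0"
    and hw: "AE x in M. x \<in> A \<longrightarrow> h x = 0 \<longrightarrow> w x = 0"
    and c: "c \<noteq> 0" and sg: "AE x in M. x \<in> A \<longrightarrow> 0 \<le> c * h x"
  shows False
proof -
  let ?f = "\<lambda>x. indicator A x * (c * h x)"
  have fi: "integrable M ?f"
    using hi unfolding set_integrable_def
    by (metis (no_types, lifting) Bochner_Integration.integrable_cong integrable_mult_right mult.left_commute real_scaleR_def)
  have "integral\<^sup>L M ?f = c * (LINT x:A|M. h x)"
    unfolding set_lebesgue_integral_def
    by (simp add: mult.left_commute)
  then have "integral\<^sup>L M ?f = 0" using h0 by simp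
  moreover have "AE x in M. 0 \<le> ?f x" using sg by eventually_elim (auto simp: indicator_def)
  ultimately have "AE x in M. ?f x = 0" using integral_nonneg_eq_0_iff_AE[OF fi] by blast
  then have "AE x in M. indicator A x *\<^sub>R w x = 0" using hw
    by eventually_elim (use c in \<open>auto simp: indicator_def split: if_splits\<close>)
  then have "integral\<^sup>L M (\<lambda>x. indicator A x *\<^sub>R w x) = integral\<^sup>L M (\<lambda>x. 0::real)"
    by (intro integral_cong_AE) (use A wm in auto)
  then show False using w0 unfolding set_lebesgue_integral_def by simp
qed

lemma L2:
  fixes h w :: "real \<Rightarrow> real" and c :: real
  assumes A: "A \<in> sets M" and wm: "w \<in> borel_measurable M"
    and hi: "set_integrable M A h" and h0: "(LINT x:A|M. h x) = 0"
    and w0: "(LINT x:A|M. w x) \<noteq> 0"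
    and hw: "AE x in M. x \<in> A \<longrightarrow> h x = 0 \<longrightarrow> w x = 0"
    and c: "c \<noteq> 0" and P: "AE x in M. x \<in> A \<longrightarrow> P x"
  shows "\<exists>x\<in>A. P x \<and> c * h x < 0"
proof (rule ccontr)
  assume nt: "\<not> ?thesis"
  have "AE x in M. x \<in> A \<longrightarrow> 0 \<le> c * h x" using P
    by eventually_elim (use nt in \<open>auto simp: not_less\<close>)
  then show False using L1[OF A wm hi h0 w0 hw c] by blast
qed

lemma L4:
  fixes f :: "real \<Rightarrow> real"
  assumes "continuous_on UNIV f" "f a * f b < 0"
  shows "\<exists>r. min a b < r \<and> r < max a b \<and> f r = 0"
proof -
  have fa: "f a \<noteq> 0" and fb: "f b \<noteq> 0" using assms(2) by auto
  have co: "continuous_on {x..y} f" for x y using assms(1) continuous_on_subset by blast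
  have "\<exists>r. min a b \<le> r \<and> r \<le> max a b \<and> f r = 0"
  proof (cases "a \<le> b")
    case True
    show ?thesis
    proof (cases "f a \<le> 0")
      case True
      then have "0 \<le> f b" using assms(2) by (smt (verit) mult_nonpos_nonpos)
      then show ?thesis using IVT'[of f a 0 b, OF True _ \<open>a \<le> b\<close> co] \<open>a \<le> b\<close> by auto
    next
      case False
      then have "f b \<le> 0" using assms(2) by (smt (verit) mult_pos_pos)
      then show ?thesis using IVT2'[of f b 0 a, OF \<open>f b \<le> 0\<close> _ \<open>a \<le> b\<close> co] False \<open>a \<le> b\<close> by auto
    qed
  next
    case False
    then have ba: "b \<le> a" by simp
    show ?thesis
    proof (cases "f b \<le> 0")
      case True
      then have "0 \<le> f a" using assms(2) by (smt (verit) mult_nonpos_nonpos)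
      then show ?thesis using IVT'[of f b 0 a, OF True _ ba co] ba by auto
    next
      case False
      then have "f a \<le> 0" using assms(2) by (smt (verit) mult_pos_pos)
      then show ?thesis using IVT2'[of f a 0 b, OF \<open>f a \<le> 0\<close> _ ba co] False ba by auto
    qed
  qed
  then obtain r where r: "min a b \<le> r" "r \<le> max a b" "f r = 0" by blast
  then have "r \<noteq> a" "r \<noteq> b" using fa fb by auto
  then show ?thesis using r by (intro exI[of _ r]) auto
qed

lemma L5:
  fixes a r :: "nat \<Rightarrow> real"
  assumes mono: "\<And>i j. i < j \<Longrightarrow> j < k \<Longrightarrow> r i < r j"
    and pos: "\<And>j. j < k \<Longrightarrow> r j > 0"
    and root: "\<And>j. j < k \<Longrightarrow> (\<Sum>i<k. a i * r j ^ (2*i)) = 0"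
  shows "\<forall>i<k. a i = 0"
proof -
  define P where "P = (\<Sum>i<k. monom (a i) i)"
  have evalP: "poly P (y^2) = (\<Sum>i<k. a i * y ^ (2*i))" for y
    unfolding P_def poly_sum poly_monom by (simp add: power_mult)
  have coeffP: "coeff P i = a i" if "i < k" for i
    unfolding P_def coeff_sum coeff_monom using that by (simp add: sum.delta)
  have P0: "P = 0"
  proof (rule ccontr)
    assume nz: "P \<noteq> 0"
    then have k0: "k > 0" unfolding P_def by (cases k) auto
    have deg: "degree P \<le> k - 1" unfolding P_def
      by (rule degree_sum_le) (auto intro: order.trans[OF degree_monom_le])
    have inj: "inj_on (\<lambda>j. r j ^ 2) {..<k}"
    proof (rule inj_onI)
      fix i j assume ij: "i \<in> {..<k}" "j \<in> {..<k}" "r i ^ 2 = r j ^ 2"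
      then have "r i = r j" using pos by (simp add: power2_eq_iff_nonneg less_imp_le)
      then show "i = j" using mono ij by (metis lessThan_iff linorder_neqE_nat less_irrefl)
    qed
    have sub: "(\<lambda>j. r j ^ 2) ` {..<k} \<subseteq> {x. poly P x = 0}" using root evalP by auto
    have "k = card ((\<lambda>j. r j ^ 2) ` {..<k})" using card_image[OF inj] by simp
    also have "\<dots> \<le> card {x. poly P x = 0}" by (rule card_mono[OF poly_roots_finite[OF nz] sub])
    also have "\<dots> \<le> degree P" by (rule card_poly_roots_bound[OF nz])
    finally show False using deg k0 by linarith
  qed
  show ?thesis using coeffP P0 by auto
qed

theorem lemmaB1:
  fixes k :: nat and S :: "nat \<Rightarrow> real set" and w :: "real \<Rightarrow> real"
  assumes meas: "\<And>j. j < k \<Longrightarrow> S j \<in> sets lebesgue"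
    and nonneg: "\<And>j. j < k \<Longrightarrow> S j \<subseteq> {0..}"
    and pos: "\<And>j. j < k \<Longrightarrow> emeasure lebesgue (S j) > 0"
    and ordered: "\<And>i j. i < j \<Longrightarrow> j < k \<Longrightarrow>
       (AE x in lebesgue. x \<in> S i \<longrightarrow> (AE y in lebesgue. y \<in> S j \<longrightarrow> x < y))"
    and w_meas: "w \<in> borel_measurable lebesgue"
    and sign: "\<And>j. j < k \<Longrightarrow> (\<forall>x\<in>S j. w x \<ge> 0) \<or> (\<forall>x\<in>S j. w x \<le> 0)"
    and integ: "\<And>i j. i < k \<Longrightarrow> j < k \<Longrightarrow>
       set_integrable lebesgue (S j) (\<lambda>x. w x * x ^ (2 * i))"
    and nonzero: "\<And>j. j < k \<Longrightarrow> (LINT x:S j|lebesgue. w x) \<noteq> 0"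
  shows "det (mat k k (\<lambda>(i, j). LINT x:S j|lebesgue. w x * x ^ (2 * i))) \<noteq> 0"
proof
  define M where "M = mat k k (\<lambda>(i, j). LINT x:S j|lebesgue. w x * x ^ (2 * i))"
  assume "det (mat k k (\<lambda>(i, j). LINT x:S j|lebesgue. w x * x ^ (2 * i))) = 0"
  then have d0: "det M = 0" unfolding M_def .
  have Mc: "M \<in> carrier_mat k k" unfolding M_def by simp
  have "det (transpose_mat M) = 0" using det_transpose[OF Mc] d0 by simp
  then obtain v where v: "v \<in> carrier_vec k" "v \<noteq> 0\<^sub>v k" "transpose_mat M *\<^sub>v v = 0\<^sub>v k"
    using det_0_iff_vec_prod_zero[of "transpose_mat M" k] Mc by auto
  define a where "a i = v $ i" for i
  define q where "q x = (\<Sum>i<k. a i * x ^ (2*i))" for x :: real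
  have anz: "\<exists>i<k. a i \<noteq> 0"
  proof (rule ccontr)
    assume "\<not> ?thesis"
    then have "v = 0\<^sub>v k" using v(1) by (intro eq_vecI) (auto simp: a_def)
    with v(2) show False by simp
  qed
  have rowsum: "(\<Sum>i<k. a i * (LINT x:S j|lebesgue. w x * x ^ (2 * i))) = 0" if j: "j < k" for j
  proof -
    have "(transpose_mat M *\<^sub>v v) $ j = 0" using v(3) j by simp
    then show ?thesis using j v(1) unfolding M_def a_def
      by (simp add: scalar_prod_def lessThan_atLeast0 mult.commute)
  qed
  have eqf: "(\<lambda>x. indicator (S j) x *\<^sub>R (w x * q x)) =
      (\<lambda>x. \<Sum>i<k. a i * (indicator (S j) x *\<^sub>R (w x * x ^ (2*i))))" for j
    by (rule ext) (simp add: q_def sum_distrib_left sum_distrib_right algebra_simps)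
  have hint: "set_integrable lebesgue (S j) (\<lambda>x. w x * q x)" if j: "j < k" for j
    unfolding set_integrable_def eqf
    using integ[OF _ j] unfolding set_integrable_def by (intro Bochner_Integration.integrable_sum) (auto intro!: integrable_mult_right)
  have hzero: "(LINT x:S j|lebesgue. w x * q x) = 0" if j: "j < k" for j
  proof -
    have "(LINT x:S j|lebesgue. w x * q x) = (\<Sum>i<k. a i * (LINT x:S j|lebesgue. w x * x ^ (2 * i)))"
      unfolding set_lebesgue_integral_def eqf
      using integ[OF _ j] unfolding set_integrable_def by (subst Bochner_Integration.integral_sum) (auto intro!: integrable_mult_right)
    then show ?thesis using rowsum[OF j] by simp
  qed
  define Q where "Q = (\<Sum>i<k. monom (a i) (2*i))"
  have Qq: "poly Q x = q x" for x unfolding Q_def q_def poly_sum poly_monom by simp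
  have "Q \<noteq> 0"
  proof
    assume "Q = 0"
    obtain i0 where i0: "i0 < k" "a i0 \<noteq> 0" using anz by blast
    have "coeff Q (2*i0) = a i0" unfolding Q_def coeff_sum coeff_monom using i0(1)
      by (simp add: sum.delta)
    then show False using \<open>Q = 0\<close> i0 by simp
  qed
  then have "finite {x. q x = 0}" using poly_roots_finite[of Q] Qq by simp
  then have "AE x in lebesgue. x \<notin> {x. q x = 0}" by (intro AE_not_in finite_null_lebesgue)
  then have hw: "AE x in lebesgue. x \<in> S j \<longrightarrow> w x * q x = 0 \<longrightarrow> w x = 0" for j
    by eventually_elim auto
  have pts: "\<exists>u\<in>S j. \<exists>v\<in>S j. P u \<and> P v \<and> q u * q v < 0"
    if j: "j < k" and P: "AE x in lebesgue. x \<in> S j \<longrightarrow> P x" for j P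
  proof -
    obtain u where u: "u \<in> S j" "P u" "(-1) * (w u * q u) < 0"
      using L2[OF meas[OF j] w_meas hint[OF j] hzero[OF j] nonzero[OF j] hw, of "-1"] P by auto
    obtain v where v: "v \<in> S j" "P v" "1 * (w v * q v) < 0"
      using L2[OF meas[OF j] w_meas hint[OF j] hzero[OF j] nonzero[OF j] hw, of "1"] P by auto
    have pu: "w u * q u > 0" and pv: "w v * q v < 0" using u(3) v(3) by auto
    have "q u * q v < 0"
    proof (cases "\<forall>x\<in>S j. w x \<ge> 0")
      case True
      then have wu: "w u \<ge> 0" and wv: "w v \<ge> 0" using u(1) v(1) by auto
      have "q u > 0" using pu wu by (metis mult_nonneg_nonpos not_less)
      moreover have "q v < 0" using pv wv by (metis mult_nonneg_nonneg not_less)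
      ultimately show ?thesis by (simp add: mult_pos_neg)
    next
      case False
      then have "\<forall>x\<in>S j. w x \<le> 0" using sign[OF j] by blast
      then have wu: "w u \<le> 0" and wv: "w v \<le> 0" using u(1) v(1) by auto
      have "q u < 0" using pu wu by (metis mult_nonpos_nonneg not_less)
      moreover have "q v > 0" using pv wv by (metis mult_nonpos_nonpos not_less)
      ultimately show ?thesis by (simp add: mult_neg_pos)
    qed
    then show ?thesis using u v by blast
  qed
  define F where "F x j \<longleftrightarrow> (\<forall>j'. j < j' \<longrightarrow> j' < k \<longrightarrow> (AE z in lebesgue. z \<in> S j' \<longrightarrow> x < z))" for x j
  have ind: "\<exists>u v. \<forall>j<m. u j \<in> S j \<and> v j \<in> S j \<and> F (u j) j \<and> F (v j) j \<and> q (u j) * q (v j) < 0 \<and>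
        (\<forall>i<j. u i < u j \<and> u i < v j \<and> v i < u j \<and> v i < v j)" if "m \<le> k" for m
    using that
  proof (induction m)
    case 0 show ?case by simp
  next
    case (Suc m)
    then obtain u v where uv: "\<forall>j<m. u j \<in> S j \<and> v j \<in> S j \<and> F (u j) j \<and> F (v j) j \<and> q (u j) * q (v j) < 0 \<and>
        (\<forall>i<j. u i < u j \<and> u i < v j \<and> v i < u j \<and> v i < v j)" by auto
    have uvj: "u j \<in> S j \<and> v j \<in> S j \<and> F (u j) j \<and> F (v j) j \<and> q (u j) * q (v j) < 0 \<and>
        (\<forall>i<j. u i < u j \<and> u i < v j \<and> v i < u j \<and> v i < v j)" if "j < m" for j
      using uv that by blast
    have mk: "m < k" using Suc.prems by simp
    have AE1: "AE x in lebesgue. x \<in> S m \<longrightarrow> F x m"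
    proof -
      have "\<forall>j'\<in>{m<..<k}. AE x in lebesgue. x \<in> S m \<longrightarrow> (AE z in lebesgue. z \<in> S j' \<longrightarrow> x < z)"
        using ordered by auto
      then have "AE x in lebesgue. \<forall>j'\<in>{m<..<k}. x \<in> S m \<longrightarrow> (AE z in lebesgue. z \<in> S j' \<longrightarrow> x < z)"
        by (subst AE_ball_countable) auto
      then show ?thesis unfolding F_def by eventually_elim auto
    qed
    have AE2: "AE x in lebesgue. x \<in> S m \<longrightarrow> (\<forall>i<m. u i < x \<and> v i < x)"
    proof -
      have "\<forall>i\<in>{..<m}. AE x in lebesgue. x \<in> S m \<longrightarrow> u i < x \<and> v i < x"
      proof
        fix i assume i: "i \<in> {..<m}"
        then have "F (u i) i" "F (v i) i" using uvj[of i] by auto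
        then have "AE z in lebesgue. z \<in> S m \<longrightarrow> u i < z" "AE z in lebesgue. z \<in> S m \<longrightarrow> v i < z"
          unfolding F_def using i mk by auto
        then show "AE x in lebesgue. x \<in> S m \<longrightarrow> u i < x \<and> v i < x" by eventually_elim auto
      qed
      then have "AE x in lebesgue. \<forall>i\<in>{..<m}. x \<in> S m \<longrightarrow> u i < x \<and> v i < x"
        by (subst AE_ball_countable) auto
      then show ?thesis by eventually_elim auto
    qed
    have "AE x in lebesgue. x \<in> S m \<longrightarrow> (F x m \<and> (\<forall>i<m. u i < x \<and> v i < x))"
      using AE1 AE2 by eventually_elim auto
    from pts[OF mk this] obtain u' v' where new: "u' \<in> S m" "v' \<in> S m" "F u' m \<and> (\<forall>i<m. u i < u' \<and> v i < u')"
      "F v' m \<and> (\<forall>i<m. u i < v' \<and> v i < v')" "q u' * q v' < 0"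
      by blast
    define u2 where "u2 = u(m := u')"
    define v2 where "v2 = v(m := v')"
    have "\<forall>j<Suc m. u2 j \<in> S j \<and> v2 j \<in> S j \<and> F (u2 j) j \<and> F (v2 j) j \<and> q (u2 j) * q (v2 j) < 0 \<and>
        (\<forall>i<j. u2 i < u2 j \<and> u2 i < v2 j \<and> v2 i < u2 j \<and> v2 i < v2 j)"
    proof (intro allI impI)
      fix j assume j: "j < Suc m"
      have u2i: "u2 i = u i" "v2 i = v i" if "i < m" for i using that by (auto simp: u2_def v2_def)
      show "u2 j \<in> S j \<and> v2 j \<in> S j \<and> F (u2 j) j \<and> F (v2 j) j \<and> q (u2 j) * q (v2 j) < 0 \<and>
        (\<forall>i<j. u2 i < u2 j \<and> u2 i < v2 j \<and> v2 i < u2 j \<and> v2 i < v2 j)"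
      proof (cases "j = m")
        case True
        then have "u2 j = u'" "v2 j = v'" by (auto simp: u2_def v2_def)
        then show ?thesis using new True u2i by auto
      next
        case False
        then have jm: "j < m" using j by linarith
        then have "\<forall>i<j. u2 i = u i \<and> v2 i = v i" using u2i by auto
        then show ?thesis using u2i[OF jm] uvj[OF jm] by auto
      qed
    qed
    then show ?case by blast
  qed
  obtain u v where uv: "\<forall>j<k. u j \<in> S j \<and> v j \<in> S j \<and> F (u j) j \<and> F (v j) j \<and> q (u j) * q (v j) < 0 \<and>
        (\<forall>i<j. u i < u j \<and> u i < v j \<and> v i < u j \<and> v i < v j)" using ind[of k] by auto
  have uvj: "u j \<in> S j \<and> v j \<in> S j \<and> F (u j) j \<and> F (v j) j \<and> q (u j) * q (v j) < 0 \<and>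
        (\<forall>i<j. u i < u j \<and> u i < v j \<and> v i < u j \<and> v i < v j)" if "j < k" for j
      using uv that by blast
  have cont: "continuous_on UNIV q" unfolding q_def by (intro continuous_intros)
  have "\<forall>j. \<exists>r. j < k \<longrightarrow> min (u j) (v j) < r \<and> r < max (u j) (v j) \<and> q r = 0"
  proof
    fix j show "\<exists>r. j < k \<longrightarrow> min (u j) (v j) < r \<and> r < max (u j) (v j) \<and> q r = 0"
    proof (cases "j < k")
      case True then show ?thesis using L4[OF cont, of "u j" "v j"] uvj[OF True] by auto
    qed auto
  qed
  from choice[OF this] obtain r where r0: "\<forall>j. j < k \<longrightarrow> min (u j) (v j) < r j \<and> r j < max (u j) (v j) \<and> q (r j) = 0"
    by blast
  then have r: "\<And>j. j < k \<Longrightarrow> min (u j) (v j) < r j \<and> r j < max (u j) (v j) \<and> q (r j) = 0"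
    by blast
  have "\<forall>i<k. a i = 0"
  proof (rule L5[of k r])
    fix i j assume ij: "i < j" "j < k"
    then have "max (u i) (v i) < min (u j) (v j)" using uvj[of j] by auto
    then show "r i < r j" using r[of i] r[of j] ij by linarith
  next
    fix j assume j: "j < k"
    then have "0 \<le> min (u j) (v j)" using uvj[OF j] nonneg[OF j] by auto
    then show "r j > 0" using r[OF j] by linarith
  next
    fix j assume j: "j < k"
    then show "(\<Sum>i<k. a i * r j ^ (2*i)) = 0" using r[OF j] unfolding q_def by simp
  qed
  then show False using anz by auto
qed

end
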